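(* Let $\mu^K$ be the probability measure on $\mathbb N_0^{\overline{\mathbb V}}$ defined by $\int\mu^K(d\underline k)\varphi(\underline k)=\int\nu^O(d\underline s)\sum_{\underline k}\varphi(\underline k)\prod_{i\in\overline{\mathbb V}}\left(\frac{s_i}{s_i+1}\right)^{k_i}\frac1{s_i+1}$ for test functions $\varphi$ (a product of geometric random variables with random means $s_i$, where $\underline s$ is distributed according to $\nu^O$). Then $\mu^K$ is invariant for the discrete KMP process with generator $L^K$ and boundary conditions $T_{\partial\mathbb V}$.
   Context: Graph: finite oriented graph $(\overline{\mathbb V},\overline E)$, $\overline{\mathbb V}=\mathbb V\cup\partial\mathbb V$ (internal/boundary vertices), $\overline E=E\cup\partial E$ with $E$ the edges inside $\mathbb V$ and $\partial E$ the edges $ij$ with $i\in\mathbb V$, $j\in\partial\mathbb V$; no edges between boundary vertices; at most one edge per pair. Fixed boundary temperatures $T_j>0$, $j\in\partial\mathbb V$. $\mathbb N_0=\{0,1,\dots\}$. Opinion process: Markov process on $\mathbb R_+^{\overline{\mathbb V}}$ with $O_j\equiv T_j$ for $j\in\partial\mathbb V$ and generator $L^Of(O)=\sum_{ij\in\overline E}\int_0^1dv\,[f(H^O_{ij;v}O)-f(O)]$, $(H^O_{ij;v}O)_\ell=vO_i+(1-v)O_j$ for $\ell\in\{i,j\}\cap\mathbb V$, $=O_\ell$ otherwise. $\nu^O$ denotes its unique invariant probability measure. Discrete KMP process with boundary conditions $T_{\partial\mathbb V}$: Markov process on $\mathbb N_0^{\overline{\mathbb V}}$ with generator $L^Kf(\underline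 k)=\sum_{ij\in\overline E}\frac1{k_i+k_j+1}\sum_{h=0}^{k_i+k_j}\Big(\mathbf 1\{j\in\mathbb V\}[f(H_{ij;h}\underline k)-f(\underline k)]+\mathbf 1\{j\in\partial\mathbb V\}\sum_{b\ge0}\left(\frac{T_j}{T_j+1}\right)^b\frac1{T_j+1}[f(H_{ij;h,b}\underline k)-f(\underline k)]\Big)$, where $(H_{ij;h}\underline k)_i=h$, $(H_{ij;h}\underline k)_j=k_i+k_j-h$, other coordinates unchanged; and $(H_{ij;h,b}\underline k)_j=b$, $(H_{ij;h,b}\underline k)_\ell=(H_{ij;h}\underline k)_\ell$ for $\ell\neq j$. *)

theory Defs
  imports "HOL-Probability.Probability"
begin

(* Vertices: a finite type 'v = \<overline>V; internal vertices V :: 'v set, boundary = - V.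
   Oriented edges Eb = E \<union> \<partial>E as pairs (i,j) with i \<in> V. *)

definition HO :: "'v set \<Rightarrow> 'v \<Rightarrow> 'v \<Rightarrow> real \<Rightarrow> ('v \<Rightarrow> real) \<Rightarrow> ('v \<Rightarrow> real)" where
  "HO V i j v x = (\<lambda>l. if l \<in> {i, j} \<inter> V then v * x i + (1 - v) * x j else x l)"

definition LO :: "'v set \<Rightarrow> ('v \<times> 'v) set \<Rightarrow> (('v \<Rightarrow> real) \<Rightarrow> real) \<Rightarrow> ('v \<Rightarrow> real) \<Rightarrow> real" where
  "LO V Eb f x = (\<Sum>(i, j)\<in>Eb. (LINT v:{0..1}|lborel. f (HO V i j v x) - f x))"

abbreviation opinion_space :: "('v \<Rightarrow> real) measure" where
  "opinion_space \<equiv> Pi\<^sub>M UNIV (\<lambda>_. borel)"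

definition opinion_invariant ::
  "'v set \<Rightarrow> ('v \<times> 'v) set \<Rightarrow> ('v \<Rightarrow> real) \<Rightarrow> ('v \<Rightarrow> real) measure \<Rightarrow> bool" where
  "opinion_invariant V Eb T \<nu> \<longleftrightarrow>
     prob_space \<nu> \<and> sets \<nu> = sets opinion_space \<and>
     (AE s in \<nu>. (\<forall>i. 0 \<le> s i) \<and> (\<forall>j. j \<notin> V \<longrightarrow> s j = T j)) \<and>
     (\<forall>f. f \<in> borel_measurable opinion_space \<longrightarrow> (\<exists>C. \<forall>x. \<bar>f x\<bar> \<le> C) \<longrightarrow>
          integral\<^sup>L \<nu> (LO V Eb f) = 0)"

definition Hk :: "'v \<Rightarrow> 'v \<Rightarrow> nat \<Rightarrow> ('v \<Rightarrow> nat) \<Rightarrow> ('v \<Rightarrow> nat)" where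
  "Hk i j h k = k(i := h, j := k i + k j - h)"

definition Hkb :: "'v \<Rightarrow> 'v \<Rightarrow> nat \<Rightarrow> nat \<Rightarrow> ('v \<Rightarrow> nat) \<Rightarrow> ('v \<Rightarrow> nat)" where
  "Hkb i j h b k = (Hk i j h k)(j := b)"

definition LK :: "'v set \<Rightarrow> ('v \<times> 'v) set \<Rightarrow> ('v \<Rightarrow> real) \<Rightarrow> (('v \<Rightarrow> nat) \<Rightarrow> real) \<Rightarrow> ('v \<Rightarrow> nat) \<Rightarrow> real" where
  "LK V Eb T f k = (\<Sum>(i, j)\<in>Eb. (1 / real (k i + k j + 1)) *
      (\<Sum>h = 0..k i + k j.
         (if j \<in> V then f (Hk i j h k) - f k
          else (\<Sum>b. (T j / (T j + 1)) ^ b * (1 / (T j + 1)) * (f (Hkb i j h b k) - f k)))))"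

definition kmp_invariant ::
  "'v set \<Rightarrow> ('v \<times> 'v) set \<Rightarrow> ('v \<Rightarrow> real) \<Rightarrow> ('v \<Rightarrow> nat) measure \<Rightarrow> bool" where
  "kmp_invariant V Eb T \<mu> \<longleftrightarrow>
     (\<forall>f :: ('v \<Rightarrow> nat) \<Rightarrow> real. (\<exists>C. \<forall>k. \<bar>f k\<bar> \<le> C) \<longrightarrow>
        integrable \<mu> (LK V Eb T f) \<and> integral\<^sup>L \<mu> (LK V Eb T f) = 0)"

definition muK :: "('v::finite \<Rightarrow> real) measure \<Rightarrow> ('v \<Rightarrow> nat) measure" where
  "muK \<nu> = density (count_space UNIV)
     (\<lambda>k. \<integral>\<^sup>+ s. ennreal (\<Prod>i\<in>UNIV. (s i / (s i + 1)) ^ (k i) * (1 / (s i + 1))) \<partial>\<nu>)"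

end

theory Submission
  imports Defs
begin

definition gw :: "real \<Rightarrow> nat \<Rightarrow> real" where
  "gw a m = (a/(a+1))^m * (1/(a+1))"

lemma gw_nonneg: "a \<ge> 0 \<Longrightarrow> gw a m \<ge> 0"
  unfolding gw_def by simp

lemma gw_prod: "a \<ge> 0 \<Longrightarrow> m \<le> N \<Longrightarrow> gw a m * gw a (N - m) = (a/(a+1))^N * (1/(a+1))^2"
  unfolding gw_def by (simp add: power2_eq_square power_add[symmetric])

lemma core_integral:
  fixes a b :: real and N :: nat
  assumes a: "a \<ge> 0" and b: "b \<ge> 0"
  shows "((\<lambda>v. ((v * a+(1 - v) * b)/((v * a+(1 - v) * b)+1))^N * (1/((v * a+(1 - v) * b)+1))^2) has_integral
          (\<Sum>m\<le>N. gw a m * gw b (N-m)) / (N+1)) {0..1}"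
proof (cases "a = b")
  case True
  have w: "v * a+(1 - v) * b = a" for v using True by (simp add: algebra_simps)
  have "(\<Sum>m\<le>N. gw a m * gw b (N-m)) = (N+1) * ((a/(a+1))^N * (1/(a+1))^2)"
    using True a by (simp add: gw_prod)
  then show ?thesis unfolding w
    using has_integral_const_real[of "(a/(a+1))^N * (1/(a+1))^2" 0 1] by simp
next
  case False
  define w where "w v = v * a+(1 - v) * b" for v
  define r where "r v = w v/(w v+1)" for v
  define F where "F v = (r v)^(N+1) / ((N+1)*(a-b))" for v
  have wpos: "w v \<ge> 0" if "v \<in> {0..1}" for v
    using that a b unfolding w_def by (auto intro!: add_nonneg_nonneg mult_nonneg_nonneg)
  have der: "(F has_vector_derivative ((w v/(w v+1))^N * (1/(w v+1))^2)) (at v within {0..1})"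
    if v: "v \<in> {0..1}" for v
  proof -
    have w1: "w v + 1 \<noteq> 0" using wpos[OF v] by linarith
    have dw: "(w has_real_derivative (a - b)) (at v within {0..1})"
      unfolding w_def by (auto intro!: derivative_eq_intros)
    have dr: "(r has_real_derivative ((a-b)/(w v+1)^2)) (at v within {0..1})"
      unfolding r_def
      using w1 by (auto intro!: derivative_eq_intros dw simp: power2_eq_square field_simps)
    have "(F has_real_derivative ((1 + real N) * (((a-b)/(w v+1)^2) * (r v)^N)) / ((N+1)*(a-b))) (at v within {0..1})"
      unfolding F_def Suc_eq_plus1[symmetric] by (intro DERIV_cdivide DERIV_power_Suc dr)
    moreover have "((1 + real N) * (((a-b)/(w v+1)^2) * (r v)^N)) / ((N+1)*(a-b))
       = (w v/(w v+1))^N * (1/(w v+1))^2"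
    proof -
      have "((1 + real N) * (((a-b)/(w v+1)^2) * (r v)^N)) / ((N+1)*(a-b)) = (r v)^N * (1/(w v+1)^2)"
      proof -
        have gen: "(1 + real N) * ((c/Y)*X) / ((real (N+1))*c) = X*(1/Y)" if "c \<noteq> 0" for c Y X :: real
          using that by simp
        show ?thesis using gen[of "a-b"] False by simp
      qed
      then show ?thesis unfolding r_def by (simp add: power_one_over)
    qed
    ultimately show ?thesis by (simp add: has_real_derivative_iff_has_vector_derivative)
  qed
  have I: "((\<lambda>v. (w v/(w v+1))^N * (1/(w v+1))^2) has_integral (F 1 - F 0)) {0..1}"
    by (rule fundamental_theorem_of_calculus) (auto intro!: der)
  define p where "p = a/(a+1)"
  define q where "q = b/(b+1)"
  have pq: "p - q = (a - b)/((a+1)*(b+1))"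
    unfolding p_def q_def using a b by (simp add: field_simps)
  have "(\<Sum>m\<le>N. gw a m * gw b (N-m)) = (1/(a+1))*(1/(b+1)) * (\<Sum>i<N+1. q^(N+1 - Suc i) * p^i)"
    unfolding gw_def p_def q_def sum_distrib_left lessThan_Suc_atMost[symmetric] Suc_eq_plus1[symmetric]
    by (intro sum.cong) (auto simp: algebra_simps)
  also have "(\<Sum>i<N+1. q^(N+1 - Suc i) * p^i) = (p^(N+1) - q^(N+1)) / (p - q)"
  proof -
    have "p - q \<noteq> 0" unfolding pq using False a b by simp
    moreover have "p^(N+1) - q^(N+1) = (p - q) * (\<Sum>i<N+1. q^(N+1 - Suc i) * p^i)"
      by (rule power_diff_sumr2)
    ultimately show ?thesis by (simp add: nonzero_eq_divide_eq mult.commute)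
  qed
  finally have S0: "(\<Sum>m\<le>N. gw a m * gw b (N-m)) = (1/(a+1))*(1/(b+1)) * ((p^(N+1) - q^(N+1)) / ((a - b)/((a+1)*(b+1))))"
    unfolding pq .
  have S1: "(\<Sum>m\<le>N. gw a m * gw b (N-m)) = (p^(N+1) - q^(N+1)) / (a - b)"
  proof -
    have gen: "(1/A)*(1/B)*(X/(e/(A*B))) = X/e" if "A \<noteq> 0" "B \<noteq> 0" for A B X e :: real
      using that by simp
    show ?thesis unfolding S0 using a b by (intro gen) auto
  qed
  have r1: "r 1 = p" "r 0 = q" by (simp_all add: r_def w_def p_def q_def)
  have S: "(\<Sum>m\<le>N. gw a m * gw b (N-m)) / (N+1) = F 1 - F 0"
    unfolding S1 F_def r1 by (simp add: diff_divide_distrib mult.commute)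
  show ?thesis using I unfolding S[symmetric] w_def by simp
qed


definition gp :: "real \<Rightarrow> nat pmf" where
  "gp a = geometric_pmf (1/(max 0 a + 1))"

lemma pmf_gp: "pmf (gp a) m = gw (max 0 a) m"
proof -
  have x: "max 0 a \<ge> 0" by simp
  have p: "0 < 1/(max 0 a + 1)" "1/(max 0 a + 1) \<le> 1" using x by auto
  have "1 - 1/(max 0 a + 1) = max 0 a / (max 0 a + 1)" using x by (simp add: field_simps)
  then show ?thesis unfolding gp_def gw_def pmf_geometric[OF p] by simp
qed

definition G :: "('v::finite \<Rightarrow> real) \<Rightarrow> ('v \<Rightarrow> nat) pmf" where
  "G s = Pi_pmf UNIV 0 (\<lambda>i. gp (s i))"

lemma pmf_G: "pmf (G s) k = (\<Prod>i\<in>UNIV. gw (max 0 (s i)) (k i))"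
  by (simp add: G_def pmf_Pi pmf_gp)

lemma prod_split2:
  fixes F :: "'v::finite \<Rightarrow> real"
  assumes "i \<noteq> j"
  shows "(\<Prod>l\<in>UNIV. F l) = F i * F j * (\<Prod>l\<in>-{i,j}. F l)"
proof -
  have "UNIV = insert i (insert j (-{i,j}))" by auto
  then have "(\<Prod>l\<in>UNIV. F l) = (\<Prod>l\<in>insert i (insert j (-{i,j})). F l)" by simp
  also have "\<dots> = F i * F j * (\<Prod>l\<in>-{i,j}. F l)" using assms by simp
  finally show ?thesis .
qed

definition Kint :: "'v \<Rightarrow> 'v \<Rightarrow> ('v \<Rightarrow> nat) \<Rightarrow> ('v \<Rightarrow> nat) pmf" where
  "Kint i j k = map_pmf (\<lambda>h. Hk i j h k) (pmf_of_set {0..k i + k j})"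

lemma Hk_eq:
  assumes "i \<noteq> j"
  shows "Hk i j h k = k' \<longleftrightarrow> h = k' i \<and> k i + k j - h = k' j \<and> (\<forall>l. l \<noteq> i \<longrightarrow> l \<noteq> j \<longrightarrow> k l = k' l)"
  using assms unfolding Hk_def fun_eq_iff by auto

lemma pmf_Kint:
  assumes ij: "i \<noteq> j"
  shows "pmf (Kint i j k) k' =
    (if k \<in> (\<lambda>a. k'(i := a, j := k' i + k' j - a)) ` {0..k' i + k' j} then 1 / (k' i + k' j + 1) else 0)"
proof -
  define N where "N = k' i + k' j"
  define S where "S = (\<lambda>a. k'(i := a, j := N - a)) ` {0..N}"
  have pre: "{0..k i + k j} \<inter> ((\<lambda>h. Hk i j h k) -` {k'}) = (if k \<in> S then {k' i} else {})"
  proof (cases "k \<in> S")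
    case True
    then obtain a where a: "a \<le> N" "k = k'(i := a, j := N - a)" unfolding S_def by auto
    have kij: "k i + k j = N" using a ij by simp
    have "{0..k i + k j} \<inter> ((\<lambda>h. Hk i j h k) -` {k'}) = {k' i}"
      using a ij kij by (auto simp: Hk_eq[OF ij] N_def)
    then show ?thesis using True by simp
  next
    case False
    have "h \<notin> (\<lambda>h. Hk i j h k) -` {k'}" if h: "h \<in> {0..k i + k j}" for h
    proof
      assume "h \<in> (\<lambda>h. Hk i j h k) -` {k'}"
      then have e: "h = k' i" "k i + k j - h = k' j" "\<forall>l. l \<noteq> i \<longrightarrow> l \<noteq> j \<longrightarrow> k l = k' l"
        using Hk_eq[OF ij] by auto
      have n: "k i + k j = N" using e h unfolding N_def by auto
      have "k = k'(i := k i, j := N - k i)"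
        using e n ij by (auto simp: fun_eq_iff)
      moreover have "k i \<le> N" using n by simp
      ultimately have "k \<in> S" unfolding S_def by force
      then show False using False by simp
    qed
    then have "{0..k i + k j} \<inter> ((\<lambda>h. Hk i j h k) -` {k'}) = {}" by blast
    then show ?thesis using False by simp
  qed
  have "pmf (Kint i j k) k' = card ({0..k i + k j} \<inter> ((\<lambda>h. Hk i j h k) -` {k'})) / card {0..k i + k j}"
    unfolding Kint_def pmf_map by (subst measure_pmf_of_set) auto
  also have "\<dots> = (if k \<in> S then 1 / (N + 1) else 0)"
  proof (cases "k \<in> S")
    case True
    then obtain a where a: "a \<le> N" "k = k'(i := a, j := N - a)" unfolding S_def by auto
    have kij: "k i + k j = N" using a ij by simp
    show ?thesis unfolding pre using True kij by simp
  qed (simp add: pre)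
  finally show ?thesis unfolding S_def N_def by simp
qed

lemma pmf_G_Kint:
  assumes ij: "i \<noteq> j" and s: "\<forall>l. s l \<ge> 0"
  shows "pmf (G s \<bind> Kint i j) k' =
    (\<Sum>a\<le>k' i + k' j. gw (s i) a * gw (s j) (k' i + k' j - a)) / (k' i + k' j + 1)
       * (\<Prod>l\<in>-{i,j}. gw (s l) (k' l))"
proof -
  define N where "N = k' i + k' j"
  define e where "e a = k'(i := a, j := N - a)" for a
  define S where "S = e ` {0..N}"
  have ei: "e a i = a" for a using ij by (simp add: e_def)
  have inj: "inj_on e {0..N}"
    by (rule inj_onI) (metis ei)
  have pK: "pmf (Kint i j k) k' = (if k \<in> S then 1 / (N+1) else 0)" for k
    unfolding pmf_Kint[OF ij] S_def e_def N_def by simp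
  have "pmf (G s \<bind> Kint i j) k' = (\<integral>k. pmf (Kint i j k) k' \<partial>measure_pmf (G s))"
    by (rule pmf_bind)
  also have "\<dots> = (\<Sum>k\<in>S. pmf (Kint i j k) k' * pmf (G s) k)"
  proof (rule integral_measure_pmf_real)
    show "finite S" unfolding S_def by simp
    show "a \<in> S" if "pmf (Kint i j a) k' \<noteq> 0" for a
      using that unfolding pK by (simp split: if_splits)
  qed
  also have "\<dots> = (\<Sum>a\<in>{0..N}. pmf (Kint i j (e a)) k' * pmf (G s) (e a))"
    unfolding S_def by (rule sum.reindex[OF inj, unfolded comp_def])
  also have "\<dots> = (\<Sum>a\<in>{0..N}. 1 / (N + 1) * (gw (s i) a * gw (s j) (N - a) * (\<Prod>l\<in>-{i,j}. gw (s l) (k' l))))"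
  proof (intro sum.cong refl)
    fix a assume a: "a \<in> {0..N}"
    have "pmf (Kint i j (e a)) k' = 1 / (N+1)"
      unfolding pK S_def using a by auto
    moreover have "pmf (G s) (e a) = gw (s i) a * gw (s j) (N - a) * (\<Prod>l\<in>-{i,j}. gw (s l) (k' l))"
      unfolding pmf_G prod_split2[OF ij] using s ij by (simp add: e_def max_def)
    ultimately show "pmf (Kint i j (e a)) k' * pmf (G s) (e a) =
      1 / (N + 1) * (gw (s i) a * gw (s j) (N - a) * (\<Prod>l\<in>-{i,j}. gw (s l) (k' l)))" by simp
  qed
  also have "\<dots> = (\<Sum>a\<le>N. gw (s i) a * gw (s j) (N - a)) / (N + 1) * (\<Prod>l\<in>-{i,j}. gw (s l) (k' l))"
    by (simp add: sum_distrib_left sum_divide_distrib sum_distrib_right atMost_atLeast0 mult.assoc)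
  finally show ?thesis unfolding N_def by simp
qed


definition U :: "real measure" where "U = restrict_space lborel {0..1}"

lemma space_U: "space U = {0..1}" unfolding U_def by (simp add: space_restrict_space)
lemma meas_U_borel: "f \<in> borel_measurable borel \<Longrightarrow> f \<in> borel_measurable U"
  unfolding U_def by (rule measurable_restrict_space1) simp

lemma prob_space_U: "prob_space U"
  unfolding U_def by (rule prob_space_restrict_space) auto

lemma nn_integral_U:
  fixes f :: "real \<Rightarrow> real"
  assumes I: "(f has_integral I) {0..1}" and nn: "\<And>v. v \<in> {0..1} \<Longrightarrow> f v \<ge> 0"
    and m: "f \<in> borel_measurable borel"
  shows "(\<integral>\<^sup>+ v. ennreal (f v) \<partial>U) = ennreal I"
proof -
  have "(\<integral>\<^sup>+ v. ennreal (f v) \<partial>U) = (\<integral>\<^sup>+ v. ennreal (f v) * indicator {0..1} v \<partial>lborel)"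
    unfolding U_def by (rule nn_integral_restrict_space) simp
  also have "\<dots> = (\<integral>\<^sup>+ v. ennreal (indicator {0..1} v * f v) \<partial>lborel)"
    by (intro nn_integral_cong) (auto split: split_indicator)
  also have "\<dots> = ennreal I"
  proof (rule nn_integral_has_integral_lborel)
    show "(\<lambda>v. indicator {0..1} v * f v) \<in> borel_measurable borel" using m by measurable
    show "0 \<le> indicator {0..1} v * f v" for v using nn by (auto split: split_indicator)
    have "((\<lambda>x. if x \<in> {0..1} then f x else 0) has_integral I) UNIV"
      using I has_integral_restrict_UNIV by blast
    then show "((\<lambda>v. indicator {0..1} v * f v) has_integral I) UNIV"
      by (rule has_integral_eq[rotated]) (auto split: split_indicator)
  qed
  finally show ?thesis .
qed

lemma meas_pmf_family:
  fixes P :: "'a \<Rightarrow> 'b::countable pmf"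
  assumes m: "\<And>k. (\<lambda>x. pmf (P x) k) \<in> borel_measurable M"
  shows "(\<lambda>x. measure_pmf (P x)) \<in> M \<rightarrow>\<^sub>M subprob_algebra (count_space UNIV)"
proof (rule measurable_subprob_algebra)
  fix x assume "x \<in> space M"
  show "subprob_space (measure_pmf (P x))" by (rule subprob_space_measure_pmf)
  show "sets (measure_pmf (P x)) = sets (count_space UNIV)" by simp
next
  fix A :: "'b set" assume "A \<in> sets (count_space UNIV)"
  have e: "emeasure (measure_pmf (P x)) A = (\<integral>\<^sup>+ k. ennreal (pmf (P x) k) * indicator A k \<partial>count_space UNIV)" for x
    by (simp add: nn_integral_measure_pmf[symmetric])
  interpret C: sigma_finite_measure "count_space (UNIV :: 'b set)"
    by (rule sigma_finite_measure_count_space)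
  have "(\<lambda>x. \<integral>\<^sup>+ k. ennreal (pmf (P x) k) * indicator A k \<partial>count_space UNIV) \<in> borel_measurable M"
  proof (rule C.borel_measurable_nn_integral)
    have "(\<lambda>p. (\<lambda>k p. ennreal (pmf (P (fst p)) k) * indicator A k) (snd p) p) \<in> borel_measurable (M \<Otimes>\<^sub>M count_space UNIV)"
    proof (rule measurable_compose_countable)
      fix k
      show "(\<lambda>p. ennreal (pmf (P (fst p)) k) * indicator A k) \<in> borel_measurable (M \<Otimes>\<^sub>M count_space UNIV)"
        using m[of k] by measurable
    qed measurable
    then show "(\<lambda>(x, k). ennreal (pmf (P x) k) * indicator A k) \<in> borel_measurable (M \<Otimes>\<^sub>M count_space UNIV)"
      by (simp add: case_prod_beta')
  qed
  then show "(\<lambda>x. emeasure (measure_pmf (P x)) A) \<in> borel_measurable M" unfolding e .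
qed

lemma meas_gw[measurable]: "(\<lambda>x. gw (f x) m) \<in> borel_measurable M" if [measurable]: "f \<in> borel_measurable M"
  unfolding gw_def by measurable

lemma meas_pmf_G:
  "(\<lambda>s. pmf (G s) k) \<in> borel_measurable (Pi\<^sub>M UNIV (\<lambda>_. borel :: real measure))"
  unfolding pmf_G by measurable

lemma meas_G:
  "(\<lambda>s. measure_pmf (G s)) \<in> Pi\<^sub>M UNIV (\<lambda>_. borel :: real measure) \<rightarrow>\<^sub>M subprob_algebra (count_space UNIV)"
  by (rule meas_pmf_family) (rule meas_pmf_G)


lemma gw_pair: "gw w c * gw w d = (w/(w+1))^(c+d) * (1/(w+1))^2"
  unfolding gw_def by (simp add: power2_eq_square power_add)

lemma meas_upd2: "(\<lambda>v. pmf (G (s(i := f v, j := g v))) k) \<in> borel_measurable borel"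
  if [measurable]: "f \<in> borel_measurable borel" "g \<in> borel_measurable borel"
  unfolding pmf_G
proof (rule borel_measurable_prod)
  fix l
  show "(\<lambda>v. gw (max 0 ((s(i := f v, j := g v)) l)) (k l)) \<in> borel_measurable borel"
    by (cases "l = j"; cases "l = i") simp_all
qed

lemma mix_int:
  fixes s :: "'v::finite \<Rightarrow> real"
  assumes ij: "i \<noteq> j" and s: "\<forall>l. s l \<ge> 0"
  shows "measure_pmf (G s \<bind> Kint i j) =
    U \<bind> (\<lambda>v. measure_pmf (G (s(i := v * s i + (1 - v) * s j, j := v * s i + (1 - v) * s j))))"
    (is "_ = U \<bind> ?N")
proof -
  define W where "W v = v * s i + (1 - v) * s j" for v
  have Wm[measurable]: "W \<in> borel_measurable borel" unfolding W_def by measurable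
  have Nm: "?N \<in> U \<rightarrow>\<^sub>M subprob_algebra (count_space UNIV)"
    by (rule meas_pmf_family, rule meas_U_borel, rule meas_upd2) measurable
  have ne: "space U \<noteq> {}" unfolding space_U by simp
  show ?thesis
  proof (rule measure_eqI_countable[where A=UNIV])
    show "sets (measure_pmf (G s \<bind> Kint i j)) = Pow UNIV" by simp
    show "sets (U \<bind> ?N) = Pow UNIV"
      by (subst sets_bind[where N="count_space UNIV"]) (auto simp: ne)
    show "countable (UNIV :: ('v \<Rightarrow> nat) set)" by simp
  next
    fix k' :: "'v \<Rightarrow> nat"
    define N where "N = k' i + k' j"
    define R where "R = (\<Prod>l\<in>-{i,j}. gw (s l) (k' l))"
    have R0: "R \<ge> 0" unfolding R_def using s by (auto intro!: prod_nonneg gw_nonneg)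
    have "emeasure (U \<bind> ?N) {k'} = (\<integral>\<^sup>+ v. emeasure (?N v) {k'} \<partial>U)"
      by (rule emeasure_bind[OF ne Nm]) simp
    also have "\<dots> = (\<integral>\<^sup>+ v. ennreal ((W v/(W v+1))^N * (1/(W v+1))^2 * R) \<partial>U)"
    proof (rule nn_integral_cong)
      fix v assume "v \<in> space U"
      then have v: "v \<in> {0..1}" unfolding space_U .
      have W0: "W v \<ge> 0" using v s unfolding W_def by (auto intro!: add_nonneg_nonneg mult_nonneg_nonneg)
      have "pmf (G (s(i := W v, j := W v))) k' = gw (W v) (k' i) * gw (W v) (k' j) * R"
        unfolding pmf_G prod_split2[OF ij] R_def using ij W0 s by (simp add: max_def)
      then show "emeasure (?N v) {k'} = ennreal ((W v/(W v+1))^N * (1/(W v+1))^2 * R)"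
        unfolding W_def[symmetric] by (simp add: emeasure_pmf_single gw_pair N_def)
    qed
    also have "\<dots> = ennreal ((\<Sum>m\<le>N. gw (s i) m * gw (s j) (N-m)) / (N+1) * R)"
    proof (rule nn_integral_U)
      show "((\<lambda>v. (W v/(W v+1))^N * (1/(W v+1))^2 * R) has_integral
          (\<Sum>m\<le>N. gw (s i) m * gw (s j) (N-m)) / (N+1) * R) {0..1}"
        unfolding W_def using core_integral[of "s i" "s j" N] s by (intro has_integral_mult_left) auto
      show "0 \<le> (W v/(W v+1))^N * (1/(W v+1))^2 * R" if "v \<in> {0..1}" for v
      proof -
        have "W v \<ge> 0" using that s unfolding W_def by (auto intro!: add_nonneg_nonneg mult_nonneg_nonneg)
        then show ?thesis using R0 by simp
      qed
      show "(\<lambda>v. (W v/(W v+1))^N * (1/(W v+1))^2 * R) \<in> borel_measurable borel" by measurable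
    qed
    also have "\<dots> = emeasure (measure_pmf (G s \<bind> Kint i j)) {k'}"
      unfolding emeasure_pmf_single pmf_G_Kint[OF ij s] N_def R_def by simp
    finally show "emeasure (measure_pmf (G s \<bind> Kint i j)) {k'} = emeasure (U \<bind> ?N) {k'}" by simp
  qed
qed

definition Kbd :: "'v \<Rightarrow> 'v \<Rightarrow> real \<Rightarrow> ('v \<Rightarrow> nat) \<Rightarrow> ('v \<Rightarrow> nat) pmf" where
  "Kbd i j t k = Kint i j k \<bind> (\<lambda>k2. map_pmf (\<lambda>b. k2(j := b)) (gp t))"

lemma resample:
  fixes t :: "'v::finite \<Rightarrow> real"
  shows "G t \<bind> (\<lambda>k2. map_pmf (\<lambda>b. k2(j := b)) (gp c)) = G (t(j := c))"
proof -
  define P where "P = Pi_pmf (-{j}) 0 (\<lambda>i. gp (t i))"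
  have UU: "(UNIV :: 'v set) = insert j (-{j})" by auto
  have G1: "G t = do {y \<leftarrow> gp (t j); f \<leftarrow> P; return_pmf (f(j:=y))}"
    unfolding G_def P_def by (subst UU, rule Pi_pmf_insert') auto
  have P2: "Pi_pmf (-{j}) 0 (\<lambda>i. gp ((t(j := c)) i)) = P"
    unfolding P_def by (rule Pi_pmf_cong) auto
  have G2: "G (t(j:=c)) = do {y \<leftarrow> gp c; f \<leftarrow> P; return_pmf (f(j:=y))}"
    unfolding G_def P2[symmetric] by (subst UU, subst Pi_pmf_insert') auto
  have "G t \<bind> (\<lambda>k2. map_pmf (\<lambda>b. k2(j := b)) (gp c)) = P \<bind> (\<lambda>f. map_pmf (\<lambda>b. f(j := b)) (gp c))"
  proof -
    have fu: "fun_upd (f(j := x)) j = fun_upd f j" for f :: "'v \<Rightarrow> nat" and x by (rule ext) simp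
    show ?thesis unfolding G1 by (simp add: bind_assoc_pmf bind_return_pmf fu)
  qed
  also have "\<dots> = G (t(j := c))"
    unfolding G2 by (subst bind_commute_pmf) (simp add: map_pmf_def)
  finally show ?thesis .
qed

lemma mix_bd:
  fixes s :: "'v::finite \<Rightarrow> real"
  assumes ij: "i \<noteq> j" and s: "\<forall>l. s l \<ge> 0"
  shows "measure_pmf (G s \<bind> Kbd i j (s j)) =
    U \<bind> (\<lambda>v. measure_pmf (G (s(i := v * s i + (1 - v) * s j))))"
proof -
  define R where "R k2 = map_pmf (\<lambda>b. k2(j := b)) (gp (s j))" for k2
  define N where "N v = measure_pmf (G (s(i := v * s i + (1 - v) * s j, j := v * s i + (1 - v) * s j)))" for v
  have Nm: "N \<in> U \<rightarrow>\<^sub>M subprob_algebra (count_space UNIV)"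
    unfolding N_def by (rule meas_pmf_family, rule meas_U_borel, rule meas_upd2) measurable
  have Rm: "(\<lambda>x. measure_pmf (R x)) \<in> count_space UNIV \<rightarrow>\<^sub>M subprob_algebra (count_space UNIV)"
    by (rule measurable_measure_pmf)
  have "G s \<bind> Kbd i j (s j) = (G s \<bind> Kint i j) \<bind> R"
    unfolding Kbd_def R_def by (simp add: bind_assoc_pmf)
  then have "measure_pmf (G s \<bind> Kbd i j (s j)) = measure_pmf (G s \<bind> Kint i j) \<bind> (\<lambda>x. measure_pmf (R x))"
    by (simp add: measure_pmf_bind)
  also have "\<dots> = (U \<bind> N) \<bind> (\<lambda>x. measure_pmf (R x))"
    unfolding mix_int[OF ij s] N_def ..
  also have "\<dots> = U \<bind> (\<lambda>v. N v \<bind> (\<lambda>x. measure_pmf (R x)))"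
    by (rule bind_assoc[OF Nm Rm])
  also have "\<dots> = U \<bind> (\<lambda>v. measure_pmf (G (s(i := v * s i + (1 - v) * s j))))"
  proof -
    have "N v \<bind> (\<lambda>x. measure_pmf (R x)) = measure_pmf (G (s(i := v * s i + (1 - v) * s j)))" for v
    proof -
      have "N v \<bind> (\<lambda>x. measure_pmf (R x)) = measure_pmf (G (s(i := v * s i + (1 - v) * s j, j := v * s i + (1 - v) * s j)) \<bind> R)"
        unfolding N_def by (simp add: measure_pmf_bind)
      also have "G (s(i := v * s i + (1 - v) * s j, j := v * s i + (1 - v) * s j)) \<bind> R
          = G ((s(i := v * s i + (1 - v) * s j, j := v * s i + (1 - v) * s j))(j := s j))"
        unfolding R_def by (rule resample)
      also have "(s(i := v * s i + (1 - v) * s j, j := v * s i + (1 - v) * s j))(j := s j) = s(i := v * s i + (1 - v) * s j)"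
        using ij by (auto simp: fun_eq_iff)
      finally show ?thesis .
    qed
    then show ?thesis by simp
  qed
  finally show ?thesis .
qed


lemma integrable_pmf_bounded:
  fixes f :: "'a \<Rightarrow> real"
  assumes "\<And>x. \<bar>f x\<bar> \<le> C"
  shows "integrable (measure_pmf p) f"
  by (rule measure_pmf.integrable_const_bound[where B=C]) (use assms in auto)

lemma expectation_bounded:
  fixes f :: "'a \<Rightarrow> real"
  assumes "\<And>x. \<bar>f x\<bar> \<le> C"
  shows "\<bar>measure_pmf.expectation p f\<bar> \<le> C"
proof -
  have C0: "0 \<le> C" using abs_ge_zero[of "f undefined"] assms[of undefined] by linarith
  have "\<bar>measure_pmf.expectation p f\<bar> \<le> measure_pmf.expectation p (\<lambda>x. \<bar>f x\<bar>)"
    by (rule integral_abs_bound)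
  also have "\<dots> \<le> measure_pmf.expectation p (\<lambda>x. C)"
    using assms C0 by (intro integral_mono integrable_pmf_bounded[of _ C]) auto
  finally show ?thesis using C0 by simp
qed

lemma exp_bind_pmf:
  fixes f :: "'b \<Rightarrow> real"
  assumes C: "\<And>x. \<bar>f x\<bar> \<le> C"
  shows "measure_pmf.expectation (M \<bind> N) f = measure_pmf.expectation M (\<lambda>x. measure_pmf.expectation (N x) f)"
  unfolding measure_pmf_bind
proof (rule integral_bind[where K="count_space UNIV" and B=C and B'=1])
  show "(\<lambda>x. measure_pmf (N x)) \<in> measure_pmf M \<rightarrow>\<^sub>M subprob_algebra (count_space UNIV)"
    by (simp add: measure_pmf_in_subprob_algebra)
  show "finite_measure (measure_pmf M)" by (rule measure_pmf.finite_measure_axioms)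
  show "AE x in measure_pmf M. emeasure (measure_pmf (N x)) (space (measure_pmf (N x))) \<le> ennreal 1"
    by simp
qed (use C in auto)

lemma exp_nat:
  fixes g :: "nat \<Rightarrow> real"
  assumes C: "\<And>b. \<bar>g b\<bar> \<le> C"
  shows "measure_pmf.expectation p g = (\<Sum>b. pmf p b * g b)"
proof -
  have "measure_pmf.expectation p g = integral\<^sup>L (count_space UNIV) (\<lambda>b. pmf p b *\<^sub>R g b)"
    unfolding measure_pmf_eq_density by (rule integral_density) auto
  also have "\<dots> = integral\<^sup>L (count_space UNIV) (\<lambda>b. pmf p b * g b)" by simp
  also have "\<dots> = (\<Sum>b. pmf p b * g b)"
  proof (rule integral_count_space_nat)
    have "integrable (measure_pmf p) g" by (rule integrable_pmf_bounded[OF C])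
    then have "integrable (density (count_space UNIV) (pmf p)) g" unfolding measure_pmf_eq_density .
    then show "integrable (count_space UNIV) (\<lambda>b. pmf p b * g b)"
      by (subst (asm) integrable_density) auto
  qed
  finally show ?thesis .
qed

lemma exp_Kint:
  "measure_pmf.expectation (Kint i j k) f = (\<Sum>h = 0..k i + k j. f (Hk i j h k)) / (k i + k j + 1)"
  unfolding Kint_def by (simp add: integral_pmf_of_set)

definition KK :: "'v set \<Rightarrow> ('v \<Rightarrow> real) \<Rightarrow> 'v \<Rightarrow> 'v \<Rightarrow> ('v \<Rightarrow> nat) \<Rightarrow> ('v \<Rightarrow> nat) pmf" where
  "KK V T i j = (if j \<in> V then Kint i j else Kbd i j (T j))"

lemma LK_edge_int:
  fixes f :: "('v \<Rightarrow> nat) \<Rightarrow> real"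
  shows "(1 / real (k i + k j + 1)) * (\<Sum>h = 0..k i + k j. f (Hk i j h k) - f k)
     = measure_pmf.expectation (Kint i j k) f - f k"
  unfolding exp_Kint by (simp add: sum_subtractf field_simps)

lemma LK_edge_bd:
  fixes f :: "('v \<Rightarrow> nat) \<Rightarrow> real"
  assumes C: "\<And>k. \<bar>f k\<bar> \<le> C" and t: "t > 0"
  shows "(1 / real (k i + k j + 1)) *
      (\<Sum>h = 0..k i + k j. (\<Sum>b. (t / (t + 1)) ^ b * (1 / (t + 1)) * (f (Hkb i j h b k) - f k)))
     = measure_pmf.expectation (Kbd i j t k) f - f k"
proof -
  have w: "pmf (gp t) b = (t / (t + 1)) ^ b * (1 / (t + 1))" for b
    unfolding pmf_gp gw_def using t by simp
  have inner: "(\<Sum>b. (t / (t + 1)) ^ b * (1 / (t + 1)) * (f (Hkb i j h b k) - f k))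
      = measure_pmf.expectation (gp t) (\<lambda>b. f (Hkb i j h b k)) - f k" for h
  proof -
    have "(\<Sum>b. (t / (t + 1)) ^ b * (1 / (t + 1)) * (f (Hkb i j h b k) - f k))
        = measure_pmf.expectation (gp t) (\<lambda>b. f (Hkb i j h b k) - f k)"
      unfolding w[symmetric] by (rule exp_nat[symmetric, where C="2*C"]) (use C abs_triangle_ineq4 in \<open>smt (verit)\<close>)
    also have "\<dots> = measure_pmf.expectation (gp t) (\<lambda>b. f (Hkb i j h b k)) - f k"
      by (subst Bochner_Integration.integral_diff) (auto intro!: integrable_pmf_bounded[of _ C] C)
    finally show ?thesis .
  qed
  have "measure_pmf.expectation (Kbd i j t k) f
     = measure_pmf.expectation (Kint i j k) (\<lambda>k2. measure_pmf.expectation (gp t) (\<lambda>b. f (k2(j := b))))"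
    unfolding Kbd_def by (subst exp_bind_pmf[OF C]) simp
  also have "\<dots> = (\<Sum>h = 0..k i + k j. measure_pmf.expectation (gp t) (\<lambda>b. f (Hkb i j h b k))) / (k i + k j + 1)"
    unfolding exp_Kint Hkb_def ..
  finally show ?thesis unfolding inner by (simp add: sum_subtractf field_simps)
qed

lemma LK_eq:
  fixes f :: "('v \<Rightarrow> nat) \<Rightarrow> real"
  assumes C: "\<And>k. \<bar>f k\<bar> \<le> C" and T: "\<forall>j. j \<notin> V \<longrightarrow> T j > 0"
  shows "LK V Eb T f k = (\<Sum>(i, j)\<in>Eb. measure_pmf.expectation (KK V T i j k) f - f k)"
  unfolding LK_def
proof (intro sum.cong refl, clarify)
  fix i j
  show "1 / real (k i + k j + 1) * (\<Sum>h = 0..k i + k j. if j \<in> V then f (Hk i j h k) - f k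
            else (\<Sum>b. (T j / (T j + 1)) ^ b * (1 / (T j + 1)) * (f (Hkb i j h b k) - f k))) =
        measure_pmf.expectation (KK V T i j k) f - f k"
  proof (cases "j \<in> V")
    case True
    then show ?thesis unfolding KK_def using LK_edge_int[of k i j f] by simp
  next
    case False
    then show ?thesis unfolding KK_def using LK_edge_bd[OF C, of "T j" k i j] T by simp
  qed
qed

lemma LK_bounded:
  fixes f :: "('v \<Rightarrow> nat) \<Rightarrow> real"
  assumes C: "\<And>k. \<bar>f k\<bar> \<le> C" and T: "\<forall>j. j \<notin> V \<longrightarrow> T j > 0"
  shows "\<bar>LK V Eb T f k\<bar> \<le> real (card Eb) * (2 * C)"
proof -
  have "\<bar>LK V Eb T f k\<bar> \<le> (\<Sum>(i, j)\<in>Eb. \<bar>measure_pmf.expectation (KK V T i j k) f - f k\<bar>)"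
    unfolding LK_eq[OF C T] by (rule order_trans[OF sum_abs]) (simp add: case_prod_beta')
  also have "\<dots> \<le> (\<Sum>(i, j)\<in>Eb. 2 * C)"
  proof (intro sum_mono, clarify)
    fix i j
    have "\<bar>measure_pmf.expectation (KK V T i j k) f\<bar> \<le> C" by (rule expectation_bounded[OF C])
    then show "\<bar>measure_pmf.expectation (KK V T i j k) f - f k\<bar> \<le> 2 * C" using C[of k] by linarith
  qed
  finally show ?thesis by simp
qed


definition Phi :: "(('v::finite \<Rightarrow> nat) \<Rightarrow> real) \<Rightarrow> ('v \<Rightarrow> real) \<Rightarrow> real" where
  "Phi f s = measure_pmf.expectation (G s) f"

lemma Phi_meas: "Phi f \<in> borel_measurable (Pi\<^sub>M UNIV (\<lambda>_. borel :: real measure))"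
proof -
  have "(\<lambda>s. integral\<^sup>L (measure_pmf (G s)) f) \<in> borel_measurable (Pi\<^sub>M UNIV (\<lambda>_. borel :: real measure))"
    by (rule measurable_compose[OF meas_G integral_measurable_subprob_algebra]) simp
  then show ?thesis unfolding Phi_def[abs_def] .
qed

lemma Phi_bounded: "(\<And>k. \<bar>f k\<bar> \<le> C) \<Longrightarrow> \<bar>Phi f s\<bar> \<le> C"
  unfolding Phi_def by (rule expectation_bounded)

lemma HO_meas:
  "(\<lambda>p. HO V i j (snd p) (fst p)) \<in> (Pi\<^sub>M UNIV (\<lambda>_. borel :: real measure) \<Otimes>\<^sub>M borel) \<rightarrow>\<^sub>M Pi\<^sub>M UNIV (\<lambda>_. borel)"
proof (rule measurable_PiM_single')
  fix l :: 'a
  show "(\<lambda>p. HO V i j (snd p) (fst p) l) \<in> borel_measurable (Pi\<^sub>M UNIV (\<lambda>_. borel) \<Otimes>\<^sub>M borel)"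
    unfolding HO_def by measurable
qed (simp add: space_PiM)

lemma HO_meas_v:
  "(\<lambda>v. HO V i j v s) \<in> U \<rightarrow>\<^sub>M Pi\<^sub>M UNIV (\<lambda>_. borel :: real measure)"
proof -
  have "(\<lambda>v. (\<lambda>p. HO V i j (snd p) (fst p)) (s, v)) \<in> borel \<rightarrow>\<^sub>M Pi\<^sub>M UNIV (\<lambda>_. borel :: real measure)"
    by (rule measurable_compose[OF _ HO_meas]) (simp add: space_PiM)
  then show ?thesis unfolding U_def by (intro measurable_restrict_space1) simp
qed

lemma HO_int: "i \<in> V \<Longrightarrow> j \<in> V \<Longrightarrow> HO V i j v s = s(i := v * s i + (1 - v) * s j, j := v * s i + (1 - v) * s j)"
  unfolding HO_def by (auto simp: fun_eq_iff)

lemma HO_bd: "i \<in> V \<Longrightarrow> j \<notin> V \<Longrightarrow> HO V i j v s = s(i := v * s i + (1 - v) * s j)"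
  unfolding HO_def by (auto simp: fun_eq_iff)

lemma edge_identity:
  fixes f :: "('v::finite \<Rightarrow> nat) \<Rightarrow> real"
  assumes C: "\<And>k. \<bar>f k\<bar> \<le> C" and iV: "i \<in> V" and ij: "i \<noteq> j"
    and s: "\<forall>l. s l \<ge> 0" and sT: "j \<notin> V \<Longrightarrow> s j = T j"
  shows "measure_pmf.expectation (G s) (\<lambda>k. measure_pmf.expectation (KK V T i j k) f - f k)
     = (LINT v:{0..1}|lborel. Phi f (HO V i j v s) - Phi f s)"
proof -
  interpret U: prob_space U by (rule prob_space_U)
  have Nm: "(\<lambda>v. measure_pmf (G (HO V i j v s))) \<in> U \<rightarrow>\<^sub>M subprob_algebra (count_space UNIV)"
    by (rule measurable_compose[OF HO_meas_v meas_G])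
  have mix: "measure_pmf (G s \<bind> KK V T i j) = U \<bind> (\<lambda>v. measure_pmf (G (HO V i j v s)))"
  proof (cases "j \<in> V")
    case True
    then show ?thesis unfolding KK_def using mix_int[OF ij s] HO_int[OF iV True] by simp
  next
    case False
    then show ?thesis unfolding KK_def using mix_bd[OF ij s] HO_bd[OF iV False] sT by simp
  qed
  have PhiHO_m: "(\<lambda>v. Phi f (HO V i j v s)) \<in> borel_measurable U"
    by (rule measurable_compose[OF HO_meas_v Phi_meas])
  have PhiHO_i: "integrable U (\<lambda>v. Phi f (HO V i j v s))"
    by (rule U.integrable_const_bound[where B=C]) (auto intro: Phi_bounded[OF C] PhiHO_m)
  have "measure_pmf.expectation (G s) (\<lambda>k. measure_pmf.expectation (KK V T i j k) f - f k)
      = measure_pmf.expectation (G s) (\<lambda>k. measure_pmf.expectation (KK V T i j k) f) - Phi f s"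
    unfolding Phi_def
    by (rule Bochner_Integration.integral_diff) (auto intro!: integrable_pmf_bounded[of _ C] expectation_bounded C)
  also have "measure_pmf.expectation (G s) (\<lambda>k. measure_pmf.expectation (KK V T i j k) f)
      = measure_pmf.expectation (G s \<bind> KK V T i j) f"
    by (rule exp_bind_pmf[OF C, symmetric])
  also have "\<dots> = integral\<^sup>L (U \<bind> (\<lambda>v. measure_pmf (G (HO V i j v s)))) f"
    unfolding mix ..
  also have "\<dots> = (\<integral>v. Phi f (HO V i j v s) \<partial>U)"
    unfolding Phi_def
    by (rule integral_bind[where K="count_space UNIV" and B=C and B'=1])
       (auto simp: C Nm U.finite_measure_axioms)
  finally have L: "measure_pmf.expectation (G s) (\<lambda>k. measure_pmf.expectation (KK V T i j k) f - f k)
      = (\<integral>v. Phi f (HO V i j v s) \<partial>U) - Phi f s" .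
  have "(LINT v:{0..1}|lborel. Phi f (HO V i j v s) - Phi f s) = (\<integral>v. Phi f (HO V i j v s) - Phi f s \<partial>U)"
    unfolding set_lebesgue_integral_def U_def by (rule integral_restrict_space[symmetric]) simp
  also have "\<dots> = (\<integral>v. Phi f (HO V i j v s) \<partial>U) - Phi f s"
    by (subst Bochner_Integration.integral_diff) (auto simp: PhiHO_i U.prob_space)
  finally show ?thesis using L by simp
qed


lemma LO_meas:
  fixes g :: "('v::finite \<Rightarrow> real) \<Rightarrow> real"
  assumes g[measurable]: "g \<in> borel_measurable (Pi\<^sub>M UNIV (\<lambda>_. borel :: real measure))"
  shows "LO V Eb g \<in> borel_measurable (Pi\<^sub>M UNIV (\<lambda>_. borel :: real measure))"
  unfolding LO_def[abs_def] set_lebesgue_integral_def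
proof (rule borel_measurable_sum, clarify)
  fix i j
  let ?M = "Pi\<^sub>M UNIV (\<lambda>_. borel :: real measure) \<Otimes>\<^sub>M (borel :: real measure)"
  have h: "(\<lambda>p. g (HO V i j (snd p) (fst p))) \<in> borel_measurable ?M"
    by (rule measurable_compose[OF HO_meas g])
  have h2: "(\<lambda>p. g (fst p)) \<in> borel_measurable ?M"
    by (rule measurable_compose[OF measurable_fst g])
  have h3: "(\<lambda>p. indicator {0..1::real} (snd p) :: real) \<in> borel_measurable ?M"
    by (rule measurable_compose[OF measurable_snd borel_measurable_indicator]) simp
  have "(\<lambda>p. indicator {0..1::real} (snd p) *\<^sub>R (g (HO V i j (snd p) (fst p)) - g (fst p)))
      \<in> borel_measurable ?M"
    by (intro borel_measurable_scaleR borel_measurable_diff h h2 h3)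
  moreover have "sets (Pi\<^sub>M UNIV (\<lambda>_. borel :: real measure) \<Otimes>\<^sub>M lborel) = sets ?M"
    by (rule sets_pair_measure_cong) simp_all
  then have "measurable (Pi\<^sub>M UNIV (\<lambda>_. borel :: real measure) \<Otimes>\<^sub>M lborel) (borel :: real measure)
      = measurable ?M borel"
    by (rule measurable_cong_sets) simp
  ultimately have "(\<lambda>(x, v). indicator {0..1::real} v *\<^sub>R (g (HO V i j v x) - g x))
      \<in> borel_measurable (Pi\<^sub>M UNIV (\<lambda>_. borel :: real measure) \<Otimes>\<^sub>M lborel)"
    by (simp add: case_prod_beta')
  then show "(\<lambda>x. LINT v|lborel. indicator {0..1} v *\<^sub>R (g (HO V i j v x) - g x))
      \<in> borel_measurable (Pi\<^sub>M UNIV (\<lambda>_. borel :: real measure))"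
    by (rule lborel.borel_measurable_lebesgue_integral)
qed

theorem main:
  fixes V :: "'v::finite set" and Eb :: "('v \<times> 'v) set" and T :: "'v \<Rightarrow> real"
    and \<nu> :: "('v \<Rightarrow> real) measure"
  assumes E: "\<forall>(i, j)\<in>Eb. i \<in> V \<and> i \<noteq> j"
    and T: "\<forall>j. j \<notin> V \<longrightarrow> T j > 0"
    and inv: "opinion_invariant V Eb T \<nu>"
  shows "prob_space (muK \<nu>) \<and> kmp_invariant V Eb T (muK \<nu>)"
proof -
  have pnu: "prob_space \<nu>" and snu: "sets \<nu> = sets (Pi\<^sub>M UNIV (\<lambda>_. borel :: real measure))"
    and AEnu: "AE s in \<nu>. (\<forall>i. 0 \<le> s i) \<and> (\<forall>j. j \<notin> V \<longrightarrow> s j = T j)"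
    and hyp: "\<And>g. g \<in> borel_measurable (Pi\<^sub>M UNIV (\<lambda>_. borel)) \<Longrightarrow> (\<exists>C. \<forall>x. \<bar>g x\<bar> \<le> C) \<Longrightarrow>
          integral\<^sup>L \<nu> (LO V Eb g) = 0"
    using inv unfolding opinion_invariant_def by auto
  interpret nu: prob_space \<nu> by (rule pnu)
  have mcong: "measurable \<nu> M = measurable (Pi\<^sub>M UNIV (\<lambda>_. borel :: real measure)) M" for M :: "'b measure"
    by (rule measurable_cong_sets) (simp_all add: snu)
  have NG: "(\<lambda>s. measure_pmf (G s)) \<in> \<nu> \<rightarrow>\<^sub>M subprob_algebra (count_space UNIV)"
    unfolding mcong by (rule meas_G)
  have ne: "space \<nu> \<noteq> {}" by (rule nu.not_empty)
  have muK_eq: "muK \<nu> = \<nu> \<bind> (\<lambda>s. measure_pmf (G s))"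
  proof (rule measure_eqI_countable[where A=UNIV])
    show "sets (muK \<nu>) = Pow UNIV" unfolding muK_def by simp
    show "sets (\<nu> \<bind> (\<lambda>s. measure_pmf (G s))) = Pow UNIV"
      by (subst sets_bind[where N="count_space UNIV"]) (auto simp: ne)
    show "countable (UNIV :: ('v \<Rightarrow> nat) set)" by simp
  next
    fix k :: "'v \<Rightarrow> nat"
    have "emeasure (muK \<nu>) {k} = (\<integral>\<^sup>+ s. ennreal (\<Prod>i\<in>UNIV. (s i / (s i + 1)) ^ (k i) * (1 / (s i + 1))) \<partial>\<nu>)"
      unfolding muK_def by (simp add: emeasure_density nn_integral_indicator_singleton)
    also have "\<dots> = (\<integral>\<^sup>+ s. emeasure (measure_pmf (G s)) {k} \<partial>\<nu>)"
    proof (rule nn_integral_cong_AE)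
      show "AE s in \<nu>. ennreal (\<Prod>i\<in>UNIV. (s i / (s i + 1)) ^ (k i) * (1 / (s i + 1))) = emeasure (measure_pmf (G s)) {k}"
        using AEnu
      proof (rule AE_mp, intro AE_I2 impI)
        fix s :: "'v \<Rightarrow> real" assume "(\<forall>i. 0 \<le> s i) \<and> (\<forall>j. j \<notin> V \<longrightarrow> s j = T j)"
        then have s: "\<forall>i. 0 \<le> s i" by simp
        then show "ennreal (\<Prod>i\<in>UNIV. (s i / (s i + 1)) ^ (k i) * (1 / (s i + 1))) = emeasure (measure_pmf (G s)) {k}"
          by (simp add: emeasure_pmf_single pmf_G gw_def max_def)
      qed
    qed
    also have "\<dots> = emeasure (\<nu> \<bind> (\<lambda>s. measure_pmf (G s))) {k}"
      by (rule emeasure_bind[OF ne NG, symmetric]) simp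
    finally show "emeasure (muK \<nu>) {k} = emeasure (\<nu> \<bind> (\<lambda>s. measure_pmf (G s))) {k}" .
  qed
  have pmu: "prob_space (muK \<nu>)"
    unfolding muK_eq by (rule nu.prob_space_bind[OF _ NG]) (simp add: measure_pmf.prob_space_axioms)
  interpret mu: prob_space "muK \<nu>" by (rule pmu)
  have smu: "sets (muK \<nu>) = sets (count_space UNIV)" unfolding muK_def by simp
  have kmp: "kmp_invariant V Eb T (muK \<nu>)"
    unfolding kmp_invariant_def
  proof (intro allI impI)
    fix f :: "('v \<Rightarrow> nat) \<Rightarrow> real"
    assume "\<exists>C. \<forall>k. \<bar>f k\<bar> \<le> C"
    then obtain C where C: "\<And>k. \<bar>f k\<bar> \<le> C" by auto
    have LKfun: "LK V Eb T f = (\<lambda>k. \<Sum>(i, j)\<in>Eb. measure_pmf.expectation (KK V T i j k) f - f k)"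
      by (rule ext) (rule LK_eq[OF C T])
    have LKb: "\<bar>LK V Eb T f k\<bar> \<le> real (card Eb) * (2 * C)" for k by (rule LK_bounded[OF C T])
    have LKm: "LK V Eb T f \<in> borel_measurable (muK \<nu>)"
      by (subst measurable_cong_sets[OF smu refl]) simp
    have int: "integrable (muK \<nu>) (LK V Eb T f)"
      by (rule mu.integrable_const_bound[where B="real (card Eb) * (2 * C)"]) (auto simp: LKb LKm)
    have "integral\<^sup>L (muK \<nu>) (LK V Eb T f) = (\<integral>s. measure_pmf.expectation (G s) (LK V Eb T f) \<partial>\<nu>)"
      unfolding muK_eq
      by (rule integral_bind[where K="count_space UNIV" and B="real (card Eb) * (2 * C)" and B'=1])
         (auto simp: LKb NG nu.finite_measure_axioms)
    also have "\<dots> = integral\<^sup>L \<nu> (LO V Eb (Phi f))"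
    proof (rule integral_cong_AE)
      show "(\<lambda>s. measure_pmf.expectation (G s) (LK V Eb T f)) \<in> borel_measurable \<nu>"
        by (rule measurable_compose[OF NG integral_measurable_subprob_algebra]) simp
      show "LO V Eb (Phi f) \<in> borel_measurable \<nu>"
        unfolding mcong by (rule LO_meas[OF Phi_meas])
      show "AE s in \<nu>. measure_pmf.expectation (G s) (LK V Eb T f) = LO V Eb (Phi f) s"
        using AEnu
      proof (rule AE_mp, intro AE_I2 impI)
        fix s :: "'v \<Rightarrow> real" assume sa: "(\<forall>i. 0 \<le> s i) \<and> (\<forall>j. j \<notin> V \<longrightarrow> s j = T j)"
        have "measure_pmf.expectation (G s) (LK V Eb T f)
            = measure_pmf.expectation (G s) (\<lambda>k. \<Sum>(i, j)\<in>Eb. measure_pmf.expectation (KK V T i j k) f - f k)"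
          by (simp only: LKfun)
        also have "\<dots> = (\<Sum>(i, j)\<in>Eb. measure_pmf.expectation (G s) (\<lambda>k. measure_pmf.expectation (KK V T i j k) f - f k))"
          unfolding case_prod_beta'
        proof (rule Bochner_Integration.integral_sum)
          fix e assume "e \<in> Eb"
          show "integrable (measure_pmf (G s)) (\<lambda>k. measure_pmf.expectation (KK V T (fst e) (snd e) k) f - f k)"
          proof (rule integrable_pmf_bounded[where C="2*C"])
            fix k
            have "\<bar>measure_pmf.expectation (KK V T (fst e) (snd e) k) f\<bar> \<le> C" by (rule expectation_bounded[OF C])
            then show "\<bar>measure_pmf.expectation (KK V T (fst e) (snd e) k) f - f k\<bar> \<le> 2 * C" using C[of k] by linarith
          qed
        qed
        also have "\<dots> = (\<Sum>(i, j)\<in>Eb. (LINT v:{0..1}|lborel. Phi f (HO V i j v s) - Phi f s))"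
        proof (intro sum.cong refl, clarify)
          fix i j assume "(i, j) \<in> Eb"
          then have "i \<in> V" "i \<noteq> j" using E by auto
          then show "measure_pmf.expectation (G s) (\<lambda>k. measure_pmf.expectation (KK V T i j k) f - f k)
              = (LINT v:{0..1}|lborel. Phi f (HO V i j v s) - Phi f s)"
            using sa by (intro edge_identity[OF C]) auto
        qed
        also have "\<dots> = LO V Eb (Phi f) s" unfolding LO_def ..
        finally show "measure_pmf.expectation (G s) (LK V Eb T f) = LO V Eb (Phi f) s" .
      qed
    qed
    also have "\<dots> = 0"
    proof (rule hyp[OF Phi_meas])
      have "\<forall>x. \<bar>Phi f x\<bar> \<le> C"
      proof
        fix x show "\<bar>Phi f x\<bar> \<le> C" by (rule Phi_bounded) (rule C)
      qed
      then show "\<exists>C. \<forall>x. \<bar>Phi f x\<bar> \<le> C" by blast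
    qed
    finally show "integrable (muK \<nu>) (LK V Eb T f) \<and> integral\<^sup>L (muK \<nu>) (LK V Eb T f) = 0"
      using int by simp
  qed
  show ?thesis using pmu kmp by simp
qed

theorem theorem5p1:
  fixes V :: "'v::finite set" and Eb :: "('v \<times> 'v) set" and T :: "'v \<Rightarrow> real"
    and \<nu> :: "('v \<Rightarrow> real) measure"
  assumes "\<forall>(i, j)\<in>Eb. i \<in> V \<and> i \<noteq> j"
    and "\<forall>(i, j)\<in>Eb. (j, i) \<notin> Eb"
    and "\<forall>j. j \<notin> V \<longrightarrow> T j > 0"
    and "opinion_invariant V Eb T \<nu>"
  shows "prob_space (muK \<nu>) \<and> kmp_invariant V Eb T (muK \<nu>)"
  using main[OF assms(1) assms(3) assms(4)] .

end
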